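(* Let $X$ be a $T_1$ space and $\mathcal{P}$ an ideal of closed subsets of $X$. If the ring $C(X)_\mathcal{P}$ is isomorphic to the ring $C(Y)$ of all real-valued continuous functions on some topological space $Y$, then $C(X)_\mathcal{P}$ is closed under uniform limits, i.e. whenever a sequence $(f_n)$ in $C(X)_\mathcal{P}$ converges uniformly on $X$ to $f\in\mathbb{R}^X$, we have $f\in C(X)_\mathcal{P}$.
   Context: An ideal of closed subsets of $X$ is a family $\mathcal{P}$ of closed subsets of $X$ closed under finite unions and such that every closed subset of a member of $\mathcal{P}$ is in $\mathcal{P}$. For $f\in\mathbb{R}^X$, $D_f$ is the set of points of discontinuity of $f$, and $C(X)_\mathcal{P}=\{f\in\mathbb{R}^X\colon \overline{D_f}\in\mathcal{P}\}$ with pointwise operations. *)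

theory Defs
  imports "HOL-Analysis.Analysis"
begin

definition closed_ideal :: "'a topology \<Rightarrow> 'a set set \<Rightarrow> bool" where
  "closed_ideal X P \<longleftrightarrow>
     (\<forall>A\<in>P. closedin X A) \<and> {} \<in> P \<and>
     (\<forall>A\<in>P. \<forall>B\<in>P. A \<union> B \<in> P) \<and>
     (\<forall>A\<in>P. \<forall>B. closedin X B \<and> B \<subseteq> A \<longrightarrow> B \<in> P)"

definition realfuns :: "'a topology \<Rightarrow> ('a \<Rightarrow> real) set" where
  "realfuns X = extensional (topspace X)"

definition discont_set :: "'a topology \<Rightarrow> ('a \<Rightarrow> real) \<Rightarrow> 'a set" where
  "discont_set X f = {x \<in> topspace X. \<not> topcontinuous_at X euclideanreal f x}"

definition CP :: "'a topology \<Rightarrow> 'a set set \<Rightarrow> ('a \<Rightarrow> real) set" where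
  "CP X P = {f \<in> realfuns X. X closure_of (discont_set X f) \<in> P}"

definition Cont :: "'b topology \<Rightarrow> ('b \<Rightarrow> real) set" where
  "Cont Y = {g \<in> realfuns Y. continuous_map Y euclideanreal g}"

definition fun_ring_iso :: "(('a \<Rightarrow> real) \<Rightarrow> ('b \<Rightarrow> real)) \<Rightarrow> ('a \<Rightarrow> real) set \<Rightarrow> ('b \<Rightarrow> real) set \<Rightarrow> bool" where
  "fun_ring_iso \<phi> A B \<longleftrightarrow> bij_betw \<phi> A B \<and>
     (\<forall>f\<in>A. \<forall>g\<in>A. \<phi> (\<lambda>x. f x + g x) = (\<lambda>y. \<phi> f y + \<phi> g y) \<and>
                    \<phi> (\<lambda>x. f x * g x) = (\<lambda>y. \<phi> f y * \<phi> g y))"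

end

theory Submission
  imports Defs
begin

lemma tc_iff:
  "topcontinuous_at X euclideanreal f x \<longleftrightarrow> x \<in> topspace X \<and> (f \<longlongrightarrow> f x) (atin X x)"
  by (simp add: topcontinuous_at_atin)

lemma tc_cong:
  assumes "\<forall>z\<in>topspace X. f z = g z"
  shows "topcontinuous_at X Y f x = topcontinuous_at X Y g x"
proof -
  have *: "topcontinuous_at X Y g x" if "topcontinuous_at X Y f x" and eq: "\<forall>z\<in>topspace X. f z = g z" for f g
  proof -
    have x: "x \<in> topspace X" and fx: "g x = f x" using that unfolding topcontinuous_at_def by auto
    have "g \<in> topspace X \<rightarrow> topspace Y" using that unfolding topcontinuous_at_def Pi_iff by auto
    moreover have "\<exists>U. openin X U \<and> x \<in> U \<and> (\<forall>y\<in>U. g y \<in> V)" if V: "openin Y V" "g x \<in> V" for V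
    proof -
      have "\<forall>V. openin Y V \<and> f x \<in> V \<longrightarrow> (\<exists>U. openin X U \<and> x \<in> U \<and> (\<forall>y \<in> U. f y \<in> V))"
        using \<open>topcontinuous_at X Y f x\<close> unfolding topcontinuous_at_def by blast
      moreover have "openin Y V \<and> f x \<in> V" using V fx by simp
      ultimately obtain U where U: "openin X U" "x \<in> U" "\<forall>y\<in>U. f y \<in> V"
        by blast
      have "U \<subseteq> topspace X" using U(1) by (rule openin_subset)
      then have "\<forall>y\<in>U. g y \<in> V" using U(3) eq by (metis subsetD)
      then show ?thesis using U(1,2) by blast
    qed
    ultimately show ?thesis using x unfolding topcontinuous_at_def by blast
  qed
  show ?thesis using *[of f g] *[of g f] assms by auto
qed

definition rst :: "'a set \<Rightarrow> ('a \<Rightarrow> real) \<Rightarrow> 'a \<Rightarrow> real" where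
  "rst T F = (\<lambda>x. if x \<in> T then F x else undefined)"

lemma rst_ext: "rst T F \<in> extensional T"
  by (simp add: rst_def extensional_def)

lemma tc_rst: "topcontinuous_at X Y (rst (topspace X) F) x = topcontinuous_at X Y F x"
  by (rule tc_cong) (simp add: rst_def)

lemma CP_rst:
  assumes P: "closed_ideal X P" and f: "f \<in> CP X P" and g: "g \<in> CP X P"
    and h: "\<And>x. x \<in> topspace X \<Longrightarrow> (f \<longlongrightarrow> f x) (atin X x) \<Longrightarrow> (g \<longlongrightarrow> g x) (atin X x)
               \<Longrightarrow> (F \<longlongrightarrow> F x) (atin X x)"
  shows "rst (topspace X) F \<in> CP X P"
proof -
  have D: "discont_set X (rst (topspace X) F) \<subseteq> discont_set X f \<union> discont_set X g"
    unfolding discont_set_def tc_rst using h by (auto simp: tc_iff)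
  have "X closure_of discont_set X (rst (topspace X) F) \<subseteq> X closure_of discont_set X f \<union> X closure_of discont_set X g"
    using closure_of_mono[OF D] closure_of_Un by metis
  moreover have "X closure_of discont_set X f \<union> X closure_of discont_set X g \<in> P"
    using P f g unfolding closed_ideal_def CP_def by blast
  ultimately have "X closure_of discont_set X (rst (topspace X) F) \<in> P"
    using P unfolding closed_ideal_def by (meson closedin_closure_of)
  then show ?thesis unfolding CP_def realfuns_def using rst_ext by blast
qed

lemma Cont_rst:
  assumes "\<And>y. y \<in> topspace Y \<Longrightarrow> (F \<longlongrightarrow> F y) (atin Y y)"
  shows "rst (topspace Y) F \<in> Cont Y"
proof -
  have "continuous_map Y euclideanreal (rst (topspace Y) F)"
    unfolding continuous_map_eq_topcontinuous_at tc_rst using assms by (simp add: tc_iff)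
  then show ?thesis unfolding Cont_def realfuns_def using rst_ext by blast
qed

lemma Cont_tendsto: "g \<in> Cont Y \<Longrightarrow> y \<in> topspace Y \<Longrightarrow> (g \<longlongrightarrow> g y) (atin Y y)"
  unfolding Cont_def continuous_map_eq_topcontinuous_at tc_iff by blast



lemma CP_const:
  assumes P: "closed_ideal X P"
  shows "rst (topspace X) (\<lambda>_. c) \<in> CP X P"
proof -
  have "discont_set X (rst (topspace X) (\<lambda>_. c)) = {}"
    unfolding discont_set_def tc_rst by (auto simp: tc_iff)
  then show ?thesis using P rst_ext unfolding CP_def realfuns_def closed_ideal_def by auto
qed

locale thm33 =
  fixes X :: "'a topology" and P :: "'a set set" and Y :: "'b topology"
    and \<phi> :: "('a \<Rightarrow> real) \<Rightarrow> ('b \<Rightarrow> real)"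
  assumes P: "closed_ideal X P" and iso: "fun_ring_iso \<phi> (CP X P) (Cont Y)"
begin

abbreviation "TX \<equiv> topspace X"
abbreviation "SY \<equiv> topspace Y"
abbreviation "AA \<equiv> CP X P"
abbreviation "BB \<equiv> Cont Y"

lemma bij: "bij_betw \<phi> AA BB" using iso unfolding fun_ring_iso_def by blast
lemma hom_add: "u \<in> AA \<Longrightarrow> v \<in> AA \<Longrightarrow> \<phi> (\<lambda>x. u x + v x) = (\<lambda>y. \<phi> u y + \<phi> v y)"
  using iso unfolding fun_ring_iso_def by blast
lemma hom_mul: "u \<in> AA \<Longrightarrow> v \<in> AA \<Longrightarrow> \<phi> (\<lambda>x. u x * v x) = (\<lambda>y. \<phi> u y * \<phi> v y)"
  using iso unfolding fun_ring_iso_def by blast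
lemma phiB: "u \<in> AA \<Longrightarrow> \<phi> u \<in> BB" using bij unfolding bij_betw_def by blast
lemma surj: "g \<in> BB \<Longrightarrow> \<exists>u\<in>AA. \<phi> u = g" using bij unfolding bij_betw_def by (metis imageE)
lemma inj: "u \<in> AA \<Longrightarrow> v \<in> AA \<Longrightarrow> \<phi> u = \<phi> v \<Longrightarrow> u = v"
  using bij unfolding bij_betw_def inj_on_def by blast

lemma A_ext: "u \<in> AA \<Longrightarrow> x \<notin> TX \<Longrightarrow> u x = undefined"
  unfolding CP_def realfuns_def extensional_def by blast
lemma B_ext: "g \<in> BB \<Longrightarrow> y \<notin> SY \<Longrightarrow> g y = undefined"
  unfolding Cont_def realfuns_def extensional_def by blast
lemma B_cont: "g \<in> BB \<Longrightarrow> continuous_map Y euclideanreal g"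
  unfolding Cont_def by blast

definition "cT c = rst TX (\<lambda>_. c)"
definition "cS c = rst SY (\<lambda>_. c)"
definition "add u v = rst TX (\<lambda>x. u x + v x)"
definition "mul u v = rst TX (\<lambda>x. u x * v x)"
definition "sq u v = rst TX (\<lambda>x. sqrt (v x - u x))"

lemma cT_A: "cT c \<in> AA" unfolding cT_def by (rule CP_const[OF P])
lemma cS_B: "cS c \<in> BB" unfolding cS_def by (rule Cont_rst) auto

lemma add_A: "u \<in> AA \<Longrightarrow> v \<in> AA \<Longrightarrow> add u v \<in> AA"
  unfolding add_def by (rule CP_rst[OF P, of u v])  (auto intro: tendsto_intros)
lemma mul_A: "u \<in> AA \<Longrightarrow> v \<in> AA \<Longrightarrow> mul u v \<in> AA"
  unfolding mul_def by (rule CP_rst[OF P, of u v])  (auto intro: tendsto_intros)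
lemma sq_A: "u \<in> AA \<Longrightarrow> v \<in> AA \<Longrightarrow> sq u v \<in> AA"
  unfolding sq_def by (rule CP_rst[OF P, of u v])  (auto intro: tendsto_intros)

lemma sum_id: "u \<in> AA \<Longrightarrow> v \<in> AA \<Longrightarrow> (\<lambda>x. u x + v x) = (\<lambda>x. add u v x + cT 0 x)"
  by (rule ext) (auto simp: add_def cT_def rst_def A_ext)
lemma mul_id: "u \<in> AA \<Longrightarrow> v \<in> AA \<Longrightarrow> (\<lambda>x. u x * v x) = (\<lambda>x. mul u v x * cT 1 x)"
  by (rule ext) (auto simp: mul_def cT_def rst_def A_ext)

definition "Z = \<phi> (cT 0)"
definition "E = \<phi> (cT 1)"

lemma phi_add: "u \<in> AA \<Longrightarrow> v \<in> AA \<Longrightarrow> \<phi> u y + \<phi> v y = \<phi> (add u v) y + Z y"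
proof -
  assume u: "u \<in> AA" and v: "v \<in> AA"
  have "(\<lambda>y. \<phi> u y + \<phi> v y) = (\<lambda>y. \<phi> (add u v) y + \<phi> (cT 0) y)"
    using hom_add[OF u v] hom_add[OF add_A[OF u v] cT_A] sum_id[OF u v] by simp
  then show ?thesis unfolding Z_def by metis
qed

lemma phi_mul: "u \<in> AA \<Longrightarrow> v \<in> AA \<Longrightarrow> \<phi> u y * \<phi> v y = \<phi> (mul u v) y * E y"
proof -
  assume u: "u \<in> AA" and v: "v \<in> AA"
  have "(\<lambda>y. \<phi> u y * \<phi> v y) = (\<lambda>y. \<phi> (mul u v) y * \<phi> (cT 1) y)"
    using hom_mul[OF u v] hom_mul[OF mul_A[OF u v] cT_A] mul_id[OF u v] by simp
  then show ?thesis unfolding E_def by metis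
qed

lemma Z0: assumes y: "y \<in> SY" shows "Z y = 0"
proof -
  obtain v0 where v0: "v0 \<in> AA" "\<phi> v0 = cS 0" using surj[OF cS_B] by blast
  obtain v1 where v1: "v1 \<in> AA" "\<phi> v1 = cS 1" using surj[OF cS_B] by blast
  have m: "mul (cT 0) v = cT 0" if "v \<in> AA" for v
    by (rule ext) (auto simp: mul_def cT_def rst_def)
  have "Z y * \<phi> v0 y = Z y * E y" using phi_mul[OF cT_A v0(1), where y=y] m[OF v0(1)] by (simp add: Z_def)
  moreover have "Z y * \<phi> v1 y = Z y * E y" using phi_mul[OF cT_A v1(1), where y=y] m[OF v1(1)] by (simp add: Z_def)
  ultimately show ?thesis using y v0(2) v1(2) by (auto simp: cS_def rst_def)
qed

lemma E_nz: assumes y: "y \<in> SY" shows "E y \<noteq> 0"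
proof -
  obtain v1 where v1: "v1 \<in> AA" "\<phi> v1 = cS 1" using surj[OF cS_B] by blast
  have "\<phi> v1 y * \<phi> v1 y = \<phi> (mul v1 v1) y * E y" using phi_mul[OF v1(1) v1(1)] .
  then show ?thesis using y v1(2) by (auto simp: cS_def rst_def)
qed

lemma E_B: "E \<in> BB" unfolding E_def by (rule phiB[OF cT_A])

definition "rho u y = \<phi> u y / E y"

lemma rho_add: "u \<in> AA \<Longrightarrow> v \<in> AA \<Longrightarrow> y \<in> SY \<Longrightarrow> rho (add u v) y = rho u y + rho v y"
  using phi_add[of u v y] Z0[of y] E_nz[of y] by (simp add: rho_def field_simps)

lemma rho_mul: "u \<in> AA \<Longrightarrow> v \<in> AA \<Longrightarrow> y \<in> SY \<Longrightarrow> rho (mul u v) y = rho u y * rho v y"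
  using phi_mul[of u v y] E_nz[of y] by (simp add: rho_def field_simps)

lemma rho_inj:
  assumes u: "u \<in> AA" and v: "v \<in> AA" and eq: "\<forall>y\<in>SY. rho u y = rho v y"
  shows "u = v"
proof -
  have "\<phi> u = \<phi> v"
  proof
    fix y show "\<phi> u y = \<phi> v y"
    proof (cases "y \<in> SY")
      case True
      then have "\<phi> u y / E y = \<phi> v y / E y" using eq unfolding rho_def by blast
      then show ?thesis using E_nz[OF True] by simp
    next
      case False then show ?thesis using B_ext[OF phiB[OF u]] B_ext[OF phiB[OF v]] by simp
    qed
  qed
  then show ?thesis using inj u v by blast
qed

lemma rho_surj:
  assumes g: "g \<in> BB" shows "\<exists>u\<in>AA. \<forall>y\<in>SY. rho u y = g y"
proof -
  have "rst SY (\<lambda>y. g y * E y) \<in> BB"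
    by (rule Cont_rst) (auto intro!: tendsto_mult Cont_tendsto[OF g] Cont_tendsto[OF E_B])
  then obtain u where u: "u \<in> AA" "\<phi> u = rst SY (\<lambda>y. g y * E y)" using surj by blast
  show ?thesis
  proof (rule bexI[OF _ u(1)])
    show "\<forall>y\<in>SY. rho u y = g y" using u(2) E_nz by (simp add: rho_def rst_def)
  qed
qed

lemma rho_tendsto: "u \<in> AA \<Longrightarrow> y \<in> SY \<Longrightarrow> (rho u \<longlongrightarrow> rho u y) (atin Y y)"
  unfolding rho_def using E_nz[of y]
  by (auto intro!: tendsto_divide Cont_tendsto[OF phiB] Cont_tendsto[OF E_B])

lemma rho_cont: "u \<in> AA \<Longrightarrow> continuous_map Y euclideanreal (rho u)"
  unfolding rho_def by (intro continuous_map_real_divide B_cont phiB E_B E_nz)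

lemma rho_mono:
  assumes u: "u \<in> AA" and v: "v \<in> AA" and le: "\<forall>x\<in>TX. u x \<le> v x" and y: "y \<in> SY"
  shows "rho u y \<le> rho v y"
proof -
  define k where "k = sq u v"
  have k: "k \<in> AA" unfolding k_def using sq_A u v .
  have "v = add u (mul k k)"
  proof
    fix x show "v x = add u (mul k k) x"
    proof (cases "x \<in> TX")
      case True then show ?thesis using le by (simp add: k_def add_def mul_def sq_def rst_def)
    next
      case False then show ?thesis using A_ext[OF v] by (simp add: add_def rst_def)
    qed
  qed
  then have "rho v y = rho u y + rho k y * rho k y"
    using rho_add[OF u mul_A[OF k k] y] rho_mul[OF k k y] by simp
  then show ?thesis by simp
qed

lemma rho_mono_rev:
  assumes u: "u \<in> AA" and v: "v \<in> AA" and le: "\<forall>y\<in>SY. rho u y \<le> rho v y" and x: "x \<in> TX"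
  shows "u x \<le> v x"
proof -
  have "rst SY (\<lambda>y. sqrt (rho v y - rho u y)) \<in> BB"
    by (rule Cont_rst) (auto intro!: tendsto_intros rho_tendsto u v)
  then obtain k where k: "k \<in> AA" "\<forall>y\<in>SY. rho k y = rst SY (\<lambda>y. sqrt (rho v y - rho u y)) y"
    using rho_surj by blast
  have "add u (mul k k) = v"
  proof (rule rho_inj[OF add_A[OF u mul_A[OF k(1) k(1)]] v], intro ballI)
    fix y assume y: "y \<in> SY"
    have "rho (add u (mul k k)) y = rho u y + rho k y * rho k y"
      using rho_add[OF u mul_A[OF k(1) k(1)] y] rho_mul[OF k(1) k(1) y] by simp
    also have "\<dots> = rho v y" using k(2) y le by (simp add: rst_def)
    finally show "rho (add u (mul k k)) y = rho v y" .
  qed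
  then have "v x = u x + k x * k x" using x by (auto simp: add_def mul_def rst_def)
  then show ?thesis by simp
qed

lemma rho_inv:
  assumes m: "m > 0" and y: "y \<in> SY"
  shows "rho (cT (1 / real m)) y = 1 / real m"
proof -
  have one: "rho (cT 1) y = 1" using E_nz[OF y] by (simp add: rho_def E_def)
  have ind: "rho (cT (real (Suc n) / real m)) y = real (Suc n) * rho (cT (1 / real m)) y" for n
  proof (induction n)
    case 0 then show ?case by simp
  next
    case (Suc n)
    have "cT (real (Suc (Suc n)) / real m) = add (cT (real (Suc n) / real m)) (cT (1 / real m))"
      by (rule ext) (simp add: cT_def add_def rst_def add_divide_distrib)
    then show ?case using rho_add[OF cT_A cT_A y] Suc by (simp add: algebra_simps)
  qed
  obtain n where n: "m = Suc n" using m by (cases m) auto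
  have "rho (cT 1) y = real m * rho (cT (1 / real m)) y"
    using ind[of n] m n by simp
  then show ?thesis using one m by (simp add: field_simps)
qed


lemma small_M:
  assumes "(e::real) > 0" obtains M :: nat where "M > 0" "1 / real M < e"
  using ex_inverse_of_nat_less[OF assms] by (auto simp: inverse_eq_divide)

lemma main:
  assumes fs: "\<And>n. fs n \<in> AA" and f: "f \<in> realfuns X"
    and lim: "uniform_limit TX fs f sequentially"
  shows "f \<in> AA"
proof -
  define G where "G n = rho (fs n)" for n
  have Gc: "\<forall>\<^sub>F n in sequentially. continuous_map Y Met_TC.mtopology (G n)"
    unfolding G_def using rho_cont[OF fs] by simp
  have cauchy: "\<exists>N. \<forall>m n y. N \<le> m \<longrightarrow> N \<le> n \<longrightarrow> y \<in> SY \<longrightarrow> dist (G m y) (G n y) < e"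
    if e: "e > 0" for e
  proof -
    obtain M :: nat where M: "M > 0" "1 / real M < e" using small_M[OF e] by blast
    have "\<forall>\<^sub>F n in sequentially. \<forall>x\<in>TX. dist (fs n x) (f x) < 1 / (2 * real M)"
      using lim M(1) unfolding uniform_limit_iff by simp
    then obtain N where N: "\<And>n x. N \<le> n \<Longrightarrow> x \<in> TX \<Longrightarrow> dist (fs n x) (f x) < 1 / (2 * real M)"
      unfolding eventually_sequentially by blast
    have le: "rho (fs m) y \<le> rho (fs n) y + 1 / real M"
      if "N \<le> m" "N \<le> n" "y \<in> SY" for m n y
    proof -
      have "\<forall>x\<in>TX. fs m x \<le> add (fs n) (cT (1 / real M)) x"
      proof
        fix x assume x: "x \<in> TX"
        have "dist (fs m x) (f x) < 1 / (2 * real M)" "dist (fs n x) (f x) < 1 / (2 * real M)"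
          using N that x by auto
        then have "fs m x \<le> fs n x + 1 / real M" by (simp add: dist_real_def abs_less_iff)
        then show "fs m x \<le> add (fs n) (cT (1 / real M)) x" using x by (simp add: add_def cT_def rst_def)
      qed
      then have "rho (fs m) y \<le> rho (add (fs n) (cT (1 / real M))) y"
        using rho_mono[OF fs add_A[OF fs cT_A]] that(3) by blast
      also have "\<dots> = rho (fs n) y + 1 / real M"
        using rho_add[OF fs cT_A that(3)] rho_inv[OF M(1) that(3)] by simp
      finally show ?thesis .
    qed
    show ?thesis
    proof (intro exI allI impI)
      fix m n y assume "N \<le> m" "N \<le> n" "y \<in> SY"
      then have "rho (fs m) y \<le> rho (fs n) y + 1 / real M" "rho (fs n) y \<le> rho (fs m) y + 1 / real M"
        using le by auto
      then show "dist (G m y) (G n y) < e" using M(2) by (simp add: G_def dist_real_def abs_le_iff)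
    qed
  qed
  have mc: "Met_TC.mcomplete TYPE(real)" by (simp add: complete_UNIV)
  obtain g where gc: "continuous_map Y Met_TC.mtopology g"
    and gl: "\<And>e. 0 < e \<Longrightarrow> \<forall>\<^sub>F n in sequentially. \<forall>y\<in>SY. dist (G n y) (g y) < e"
    using Met_TC.continuous_map_uniformly_Cauchy_limit[OF mc Gc cauchy] by blast
  have "rst SY g \<in> BB"
    by (rule Cont_rst) (use gc in \<open>simp add: continuous_map_atin\<close>)
  then obtain h where h: "h \<in> AA" "\<forall>y\<in>SY. rho h y = rst SY g y" using rho_surj by blast
  have hg: "\<And>y. y \<in> SY \<Longrightarrow> rho h y = g y" using h(2) by (simp add: rst_def)
  have lim2: "uniform_limit TX fs h sequentially"
    unfolding uniform_limit_iff
  proof (intro allI impI)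
    fix e :: real assume e: "e > 0"
    obtain M :: nat where M: "M > 0" "1 / real M < e" using small_M[OF e] by blast
    have "\<forall>\<^sub>F n in sequentially. \<forall>y\<in>SY. dist (G n y) (g y) < 1 / real M"
      using gl M(1) by simp
    then show "\<forall>\<^sub>F n in sequentially. \<forall>x\<in>TX. dist (fs n x) (h x) < e"
    proof (rule eventually_mono)
      fix n assume n: "\<forall>y\<in>SY. dist (G n y) (g y) < 1 / real M"
      have c: "\<And>y. y \<in> SY \<Longrightarrow> rho (add u (cT (1 / real M))) y = rho u y + 1 / real M" if "u \<in> AA" for u
        using rho_add[OF that cT_A] rho_inv[OF M(1)] by simp
      have "\<forall>y\<in>SY. rho (fs n) y \<le> rho (add h (cT (1 / real M))) y"
        using n c[OF h(1)] hg by (auto simp: G_def dist_real_def abs_less_iff)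
      then have a1: "\<forall>x\<in>TX. fs n x \<le> add h (cT (1 / real M)) x"
        using rho_mono_rev[OF fs add_A[OF h(1) cT_A]] by blast
      have "\<forall>y\<in>SY. rho h y \<le> rho (add (fs n) (cT (1 / real M))) y"
        using n c[OF fs] hg by (auto simp: G_def dist_real_def abs_less_iff)
      then have a2: "\<forall>x\<in>TX. h x \<le> add (fs n) (cT (1 / real M)) x"
        using rho_mono_rev[OF h(1) add_A[OF fs cT_A]] by blast
      show "\<forall>x\<in>TX. dist (fs n x) (h x) < e"
      proof
        fix x assume x: "x \<in> TX"
        have "fs n x \<le> h x + 1 / real M" "h x \<le> fs n x + 1 / real M"
          using a1 a2 x by (auto simp: add_def cT_def rst_def)
        then show "dist (fs n x) (h x) < e" using M(2) by (simp add: dist_real_def abs_le_iff)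
      qed
    qed
  qed
  have "f = h"
  proof
    fix x show "f x = h x"
    proof (cases "x \<in> TX")
      case True
      show ?thesis
        using tendsto_unique[OF trivial_limit_sequentially tendsto_uniform_limitI[OF lim True]
                                tendsto_uniform_limitI[OF lim2 True]] .
    next
      case False then show ?thesis using f A_ext[OF h(1)] by (simp add: realfuns_def extensional_def)
    qed
  qed
  then show ?thesis using h(1) by simp
qed
end

theorem theorem3p3:
  fixes X :: "'a topology" and P :: "'a set set" and Y :: "'b topology"
    and \<phi> :: "('a \<Rightarrow> real) \<Rightarrow> ('b \<Rightarrow> real)"
  assumes "t1_space X"
    and "closed_ideal X P"
    and "fun_ring_iso \<phi> (CP X P) (Cont Y)"
    and "\<And>n. fs n \<in> CP X P"
    and "f \<in> realfuns X"
    and "uniform_limit (topspace X) fs f sequentially"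
  shows "f \<in> CP X P"
proof -
  interpret thm33 X P Y \<phi> using assms(2,3) by unfold_locales
  show ?thesis using main assms(4-6) by blast
qed

end
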